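(* Let $(X,\mu)$ be a discrete-time BRW and $A\subseteq X$ nonempty. The following are equivalent: (1) $q(x,A)=\bar q(x)$ for all $x\in X$; (2) $q_0(x,A)\le\bar q(x)$ for all $x\in X$; (3) for every $x\in X$, either $\bar q(x)=1$ or, conditioned on global survival starting from one particle at $x$, local survival in $A$ occurs with probability $1$.
   Context: $S_X:=\{f:X\to\mathbb N:\sum_yf(y)<\infty\}$; a discrete-time BRW $(X,\mu)$: probability measures $\mu_x$ on $S_X$, each particle at $x$ independently replaced by $f(y)$ particles at each $y$, $f\sim\mu_x$; $\eta_n(y)$ is the number of particles at $y$ in generation $n$. For $n\ge0$, $q_n(x,A)$ is the probability, starting with one particle at $x$, that $\eta_k(y)=0$ for all $k\ge n+1$ and all $y\in A$; $q(x,A):=\lim_nq_n(x,A)$ is the probability of local extinction in $A$, $\bar q(x):=q(x,X)$. Local survival in $A$ is the complement of local extinction in $A$; global survival is the event that particles exist at every generation. *)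

theory Defs
  imports "HOL-Probability.Probability" "HOL-Library.Multiset"
begin

text \<open>
  A configuration is a finitely supported function X to nat, i.e. an 'a multiset
  (count eta y = number of particles at y).  The offspring law of a particle at x is
  mu x, a probability distribution on configurations (a pmf, since S_X is countable).

  Realisation: independent random variables omega (n, i, x) with law mu x, for all
  generations n, particle indices i and sites x.  In generation n the particles at
  site y are numbered 0, ..., count (eta n) y - 1, and particle i at y is replaced by
  the configuration omega (n, i, y); all replacements are independent.
\<close>

definition brw_space :: "('a \<Rightarrow> 'a multiset pmf) \<Rightarrow> (nat \<times> nat \<times> 'a \<Rightarrow> 'a multiset) measure" where
  "brw_space \<mu> = PiM UNIV (\<lambda>(n, i, x). measure_pmf (\<mu> x))"

fun brw_gen :: "'a \<Rightarrow> (nat \<times> nat \<times> 'a \<Rightarrow> 'a multiset) \<Rightarrow> nat \<Rightarrow> 'a multiset" where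
  "brw_gen x0 \<omega> 0 = {#x0#}"
| "brw_gen x0 \<omega> (Suc n) =
     (\<Sum>y\<in>set_mset (brw_gen x0 \<omega> n). \<Sum>i<count (brw_gen x0 \<omega> n) y. \<omega> (n, i, y))"

definition brw_qn :: "('a \<Rightarrow> 'a multiset pmf) \<Rightarrow> nat \<Rightarrow> 'a \<Rightarrow> 'a set \<Rightarrow> real" where
  "brw_qn \<mu> n x A = measure (brw_space \<mu>)
     {\<omega> \<in> space (brw_space \<mu>). \<forall>k\<ge>Suc n. \<forall>y\<in>A. count (brw_gen x \<omega> k) y = 0}"

definition brw_q :: "('a \<Rightarrow> 'a multiset pmf) \<Rightarrow> 'a \<Rightarrow> 'a set \<Rightarrow> real" where
  "brw_q \<mu> x A = lim (\<lambda>n. brw_qn \<mu> n x A)"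

definition brw_qbar :: "('a \<Rightarrow> 'a multiset pmf) \<Rightarrow> 'a \<Rightarrow> real" where
  "brw_qbar \<mu> x = brw_q \<mu> x UNIV"

definition global_survival :: "('a \<Rightarrow> 'a multiset pmf) \<Rightarrow> 'a \<Rightarrow> (nat \<times> nat \<times> 'a \<Rightarrow> 'a multiset) set" where
  "global_survival \<mu> x = {\<omega> \<in> space (brw_space \<mu>). \<forall>n. brw_gen x \<omega> n \<noteq> {#}}"

definition local_survival :: "('a \<Rightarrow> 'a multiset pmf) \<Rightarrow> 'a \<Rightarrow> 'a set \<Rightarrow> (nat \<times> nat \<times> 'a \<Rightarrow> 'a multiset) set" where
  "local_survival \<mu> x A = space (brw_space \<mu>) -
     {\<omega> \<in> space (brw_space \<mu>). \<exists>n. \<forall>k\<ge>Suc n. \<forall>y\<in>A. count (brw_gen x \<omega> k) y = 0}"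

end

theory Submission
  imports Defs
begin


instance multiset :: (countable) countable
  by (rule countable_classI[of "\<lambda>M. to_nat (SOME xs. mset xs = M)"])
     (metis (mono_tags, lifting) ex_mset someI_ex to_nat_split)

fun gen_from :: "'a multiset \<Rightarrow> (nat \<times> nat \<times> 'a \<Rightarrow> 'a multiset) \<Rightarrow> nat \<Rightarrow> 'a multiset" where
  "gen_from \<zeta> \<omega> 0 = \<zeta>"
| "gen_from \<zeta> \<omega> (Suc n) =
     (\<Sum>y\<in>set_mset (gen_from \<zeta> \<omega> n). \<Sum>i<count (gen_from \<zeta> \<omega> n) y. \<omega> (n, i, y))"

lemma brw_gen_eq: "brw_gen x \<omega> n = gen_from {#x#} \<omega> n"
  by (induction n) auto

definition shift :: "(nat \<times> nat \<times> 'a \<Rightarrow> 'b) \<Rightarrow> (nat \<times> nat \<times> 'a \<Rightarrow> 'b)" where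
  "shift \<omega> = (\<lambda>(n,i,y). \<omega> (Suc n, i, y))"

lemma gen_from_Suc': "gen_from \<zeta> \<omega> (Suc k) = gen_from (gen_from \<zeta> \<omega> 1) (shift \<omega>) k"
  by (induction k) (auto simp: shift_def)

lemma gen_from_empty: "gen_from \<zeta> \<omega> n = {#} \<Longrightarrow> n \<le> k \<Longrightarrow> gen_from \<zeta> \<omega> k = {#}"
  by (induction k) (auto simp: le_Suc_eq)

lemma gen_single_1: "gen_from {#x#} \<omega> 1 = \<omega> (0,0,x)"
  by simp

definition MM :: "('a \<Rightarrow> 'a multiset pmf) \<Rightarrow> nat \<times> nat \<times> 'a \<Rightarrow> 'a multiset measure" where
  "MM \<mu> = (\<lambda>(n,i,x). measure_pmf (\<mu> x))"

context fixes \<mu> :: "'a::countable \<Rightarrow> 'a multiset pmf"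
begin

lemma brw_space_MM: "brw_space \<mu> = PiM UNIV (MM \<mu>)"
  unfolding brw_space_def MM_def ..

lemma PPS: "product_prob_space (MM \<mu>)"
  unfolding product_prob_space_def product_prob_space_axioms_def product_sigma_finite_def
  by (auto simp: MM_def split: prod.splits intro: prob_space_measure_pmf
      prob_space_imp_sigma_finite)

lemma prob_brw: "prob_space (brw_space \<mu>)"
  unfolding brw_space_MM by (rule prob_space_PiM) (auto simp: MM_def intro: prob_space_measure_pmf split: prod.splits)

lemma sets_MM[simp]: "sets (MM \<mu> j) = UNIV"
  by (auto simp: MM_def split: prod.splits)

lemma coord_meas: "(\<lambda>\<omega>. \<omega> j) \<in> measurable (brw_space \<mu>) (count_space UNIV)"
proof -
  have "(\<lambda>\<omega>. \<omega> j) \<in> measurable (brw_space \<mu>) (MM \<mu> j)"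
    unfolding brw_space_MM by (rule measurable_component_singleton) auto
  then show ?thesis using measurable_cong_sets[of "brw_space \<mu>" "brw_space \<mu>" "MM \<mu> j" "count_space UNIV"] by auto
qed

end

lemma sum_meas:
  fixes f :: "'i \<Rightarrow> 'm \<Rightarrow> 'b::{countable,comm_monoid_add}"
  assumes "finite S" "\<And>s. s \<in> S \<Longrightarrow> f s \<in> measurable M (count_space UNIV)"
  shows "(\<lambda>\<omega>. \<Sum>s\<in>S. f s \<omega>) \<in> measurable M (count_space UNIV)"
  using assms
proof (induction S rule: finite_induct)
  case empty then show ?case by simp
next
  case (insert s S)
  have "(\<lambda>\<omega>. (\<lambda>a \<omega>. a + (\<Sum>s\<in>S. f s \<omega>)) (f s \<omega>) \<omega>) \<in> measurable M (count_space UNIV)"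
    apply (rule measurable_compose_countable[where g="f s"])
     apply (rule measurable_compose[OF insert.IH]) 
    using insert by auto
  then show ?case using insert by simp
qed

context fixes \<mu> :: "'a::countable \<Rightarrow> 'a multiset pmf"
begin

lemma gen_meas: "(\<lambda>\<omega>. gen_from \<zeta> \<omega> k) \<in> measurable (brw_space \<mu>) (count_space UNIV)"
proof (induction k)
  case 0 then show ?case by simp
next
  case (Suc k)
  have "(\<lambda>\<omega>. (\<lambda>m \<omega>. \<Sum>y\<in>set_mset m. \<Sum>i<count m y. \<omega> (k, i, y)) (gen_from \<zeta> \<omega> k) \<omega>)
        \<in> measurable (brw_space \<mu>) (count_space UNIV)"
    apply (rule measurable_compose_countable[where g="\<lambda>\<omega>. gen_from \<zeta> \<omega> k"])
     apply (intro sum_meas coord_meas; simp)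
    by (rule Suc)
  then show ?case by simp
qed

lemma gen_sets: "{\<omega> \<in> space (brw_space \<mu>). P (gen_from \<zeta> \<omega> k)} \<in> sets (brw_space \<mu>)"
proof -
  have "(\<lambda>\<omega>. gen_from \<zeta> \<omega> k) -` {m. P m} \<inter> space (brw_space \<mu>) \<in> sets (brw_space \<mu>)"
    by (rule measurable_sets[OF gen_meas]) auto
  then show ?thesis by (simp add: vimage_def Int_def conj_commute)
qed

end


lemma distr_merge_PiM_infinite:
  assumes M: "\<And>i. prob_space (M i)" and IJ: "I \<inter> J = {}"
  shows "distr (PiM I M \<Otimes>\<^sub>M PiM J M) (PiM (I \<union> J) M) (merge I J) = PiM (I \<union> J) M"
proof (rule measure_eqI_PiM_infinite[symmetric, OF refl])
  interpret I: prob_space "PiM I M" using M by (intro prob_space_PiM) auto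
  interpret J: prob_space "PiM J M" using M by (intro prob_space_PiM) auto
  interpret IJ: prob_space "PiM (I \<union> J) M" using M by (intro prob_space_PiM) auto
  show "finite_measure (PiM (I \<union> J) M)" by unfold_locales
  show "sets (distr (Pi\<^sub>M I M \<Otimes>\<^sub>M Pi\<^sub>M J M) (Pi\<^sub>M (I \<union> J) M) (merge I J)) = sets (Pi\<^sub>M (I \<union> J) M)"
    by simp
  fix K A assume K: "finite K" "K \<subseteq> I \<union> J" and A: "\<And>i. i \<in> K \<Longrightarrow> A i \<in> sets (M i)"
  let ?X = "prod_emb (I \<union> J) M K (Pi\<^sub>E K A)"
  have "PiM (I \<union> J) M ?X = (\<Prod>i\<in>K. M i (A i))"
    using M K A by (intro emeasure_PiM_emb) auto
  also have "\<dots> = (\<Prod>i\<in>K\<inter>I. M i (A i)) * (\<Prod>i\<in>K\<inter>J. M i (A i))"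
  proof -
    have "K = (K \<inter> I) \<union> (K \<inter> J)" using K by auto
    then have "(\<Prod>i\<in>K. M i (A i)) = (\<Prod>i\<in>(K \<inter> I) \<union> (K \<inter> J). M i (A i))" by simp
    also have "\<dots> = (\<Prod>i\<in>K\<inter>I. M i (A i)) * (\<Prod>i\<in>K\<inter>J. M i (A i))"
      using K IJ by (intro prod.union_disjoint) auto
    finally show ?thesis .
  qed
  also have "(\<Prod>i\<in>K\<inter>I. M i (A i)) = PiM I M (prod_emb I M (K\<inter>I) (Pi\<^sub>E (K\<inter>I) A))"
    using M K A by (intro emeasure_PiM_emb[symmetric]) auto
  also have "(\<Prod>i\<in>K\<inter>J. M i (A i)) = PiM J M (prod_emb J M (K\<inter>J) (Pi\<^sub>E (K\<inter>J) A))"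
    using M K A by (intro emeasure_PiM_emb[symmetric]) auto
  also have "PiM I M (prod_emb I M (K\<inter>I) (Pi\<^sub>E (K\<inter>I) A)) * PiM J M (prod_emb J M (K\<inter>J) (Pi\<^sub>E (K\<inter>J) A))
      = (PiM I M \<Otimes>\<^sub>M PiM J M) (prod_emb I M (K\<inter>I) (Pi\<^sub>E (K\<inter>I) A) \<times> prod_emb J M (K\<inter>J) (Pi\<^sub>E (K\<inter>J) A))"
    using K A by (intro J.emeasure_pair_measure_Times[symmetric] sets_PiM_I) auto
  also have "prod_emb I M (K\<inter>I) (Pi\<^sub>E (K\<inter>I) A) \<times> prod_emb J M (K\<inter>J) (Pi\<^sub>E (K\<inter>J) A)
      = merge I J -` ?X \<inter> space (PiM I M \<Otimes>\<^sub>M PiM J M)"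
  proof (rule set_eqI, clarify)
    fix x y
    show "((x, y) \<in> prod_emb I M (K\<inter>I) (Pi\<^sub>E (K\<inter>I) A) \<times> prod_emb J M (K\<inter>J) (Pi\<^sub>E (K\<inter>J) A)) =
      ((x, y) \<in> merge I J -` ?X \<inter> space (PiM I M \<Otimes>\<^sub>M PiM J M))"
      unfolding prod_emb_iff space_pair_measure space_PiM
      using K IJ by (auto simp: prod_emb_iff PiE_iff extensional_def merge_def restrict_def split: if_splits)
  qed
  finally show "PiM (I \<union> J) M ?X = distr (PiM I M \<Otimes>\<^sub>M PiM J M) (PiM (I \<union> J) M) (merge I J) ?X"
    using K A by (subst emeasure_distr) (auto intro!: sets_PiM_I)
qed


definition L0 :: "(nat \<times> nat \<times> 'a) set" where "L0 = {j. fst j = 0}"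

lemma gen1_merge:
  "gen_from \<zeta> (merge L0 (- L0) (a, b)) 1 = gen_from \<zeta> a 1"
  by (simp add: L0_def)

lemma gen1_merge': "gen_from \<zeta> (merge L0 (- L0) (a, b)) (Suc 0) = gen_from \<zeta> a (Suc 0)"
  by (simp add: L0_def)

lemma shift_merge:
  "shift (merge L0 (- L0) (a, b)) = shift b"
  by (auto simp: L0_def shift_def fun_eq_iff)

context fixes \<mu> :: "'a::countable \<Rightarrow> 'a multiset pmf"
begin

lemma brw_distr_merge:
  "distr (PiM L0 (MM \<mu>) \<Otimes>\<^sub>M PiM (- L0) (MM \<mu>)) (brw_space \<mu>) (merge L0 (- L0)) = brw_space \<mu>"
proof -
  have "distr (PiM L0 (MM \<mu>) \<Otimes>\<^sub>M PiM (- L0) (MM \<mu>)) (PiM (L0 \<union> - L0) (MM \<mu>)) (merge L0 (- L0))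
     = PiM (L0 \<union> - L0) (MM \<mu>)"
    by (rule distr_merge_PiM_infinite) (auto simp: MM_def intro: prob_space_measure_pmf split: prod.splits)
  then show ?thesis by (simp add: brw_space_MM)
qed

lemma brw_distr_shift:
  "distr (PiM (- L0) (MM \<mu>)) (brw_space \<mu>) shift = brw_space \<mu>"
proof -
  define f where "f = (\<lambda>(n::nat, i::nat, y::'a). (Suc n, i, y))"
  have "distr (PiM (- L0) (MM \<mu>)) (PiM UNIV (\<lambda>i. MM \<mu> (f i))) (\<lambda>\<omega>. \<lambda>n\<in>UNIV. \<omega> (f n))
     = PiM UNIV (\<lambda>i. MM \<mu> (f i))"
    by (rule distr_PiM_reindex) 
       (auto simp: MM_def f_def L0_def inj_on_def intro: prob_space_measure_pmf split: prod.splits)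
  moreover have "(\<lambda>i. MM \<mu> (f i)) = MM \<mu>" by (auto simp: MM_def f_def fun_eq_iff)
  moreover have "(\<lambda>\<omega>. \<lambda>n\<in>UNIV. \<omega> (f n)) = shift" by (auto simp: shift_def f_def fun_eq_iff)
  ultimately show ?thesis unfolding brw_space_MM by metis
qed

lemma shift_meas: "shift \<in> measurable (PiM (- L0) (MM \<mu>)) (brw_space \<mu>)"
  unfolding brw_space_MM
proof (rule measurable_PiM_single')
  fix j :: "nat \<times> nat \<times> 'a"
  obtain n i y where j: "j = (n, i, y)" by (cases j) auto
  have "(\<lambda>\<omega>. \<omega> (Suc n, i, y)) \<in> measurable (PiM (- L0) (MM \<mu>)) (MM \<mu> (Suc n, i, y))"
    by (rule measurable_component_singleton) (auto simp: L0_def)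
  then show "(\<lambda>\<omega>. shift \<omega> j) \<in> measurable (PiM (- L0) (MM \<mu>)) (MM \<mu> j)"
    by (simp add: j shift_def MM_def)
next
  show "shift \<in> space (Pi\<^sub>M (- L0) (MM \<mu>)) \<rightarrow> (\<Pi>\<^sub>E i\<in>UNIV. space (MM \<mu> i))"
    by (auto simp: shift_def MM_def split: prod.splits)
qed


lemma merge_meas: "merge L0 (- L0) \<in> measurable (PiM L0 (MM \<mu>) \<Otimes>\<^sub>M PiM (- L0) (MM \<mu>)) (brw_space \<mu>)"
  using measurable_merge[of L0 "- L0" "MM \<mu>"] by (simp add: brw_space_MM)

lemma gen1_Hmeas: "(\<lambda>\<omega>. (H::'a multiset \<Rightarrow> ennreal) (gen_from \<zeta> \<omega> 1)) \<in> borel_measurable (brw_space \<mu>)"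
  by (rule measurable_compose_countable[where f="\<lambda>m \<omega>. H m" and g="\<lambda>\<omega>. gen_from \<zeta> \<omega> 1"])
     (simp, rule gen_meas)

lemma SPLIT:
  assumes \<Psi>: "\<And>m. {\<omega> \<in> space (brw_space \<mu>). \<Psi> m \<omega>} \<in> sets (brw_space \<mu>)"
  and S: "{\<omega> \<in> space (brw_space \<mu>). \<Psi> (gen_from \<zeta> \<omega> 1) (shift \<omega>)} \<in> sets (brw_space \<mu>)"
  shows "emeasure (brw_space \<mu>) {\<omega> \<in> space (brw_space \<mu>). \<Psi> (gen_from \<zeta> \<omega> 1) (shift \<omega>)}
     = (\<integral>\<^sup>+\<omega>. emeasure (brw_space \<mu>) {\<omega>' \<in> space (brw_space \<mu>). \<Psi> (gen_from \<zeta> \<omega> 1) \<omega>'} \<partial>brw_space \<mu>)"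
proof -
  let ?B = "brw_space \<mu>"
  let ?P0 = "PiM L0 (MM \<mu>)" and ?PJ = "PiM (- L0) (MM \<mu>)" and ?mg = "merge L0 (- L0)"
  let ?S = "{\<omega> \<in> space ?B. \<Psi> (gen_from \<zeta> \<omega> 1) (shift \<omega>)}"
  define H where "H m = emeasure ?B {\<omega>' \<in> space ?B. \<Psi> m \<omega>'}" for m
  interpret PJ: prob_space ?PJ by (rule prob_space_PiM) (auto simp: MM_def intro: prob_space_measure_pmf split: prod.splits)
  interpret P0: prob_space ?P0 by (rule prob_space_PiM) (auto simp: MM_def intro: prob_space_measure_pmf split: prod.splits)
  have "emeasure (distr (?P0 \<Otimes>\<^sub>M ?PJ) ?B ?mg) ?S = emeasure (?P0 \<Otimes>\<^sub>M ?PJ) (?mg -` ?S \<inter> space (?P0 \<Otimes>\<^sub>M ?PJ))"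
    by (rule emeasure_distr[OF merge_meas S])
  then have "emeasure ?B ?S = emeasure (?P0 \<Otimes>\<^sub>M ?PJ) (?mg -` ?S \<inter> space (?P0 \<Otimes>\<^sub>M ?PJ))"
    by (simp only: brw_distr_merge)
  also have "\<dots> = (\<integral>\<^sup>+a. emeasure ?PJ (Pair a -` (?mg -` ?S \<inter> space (?P0 \<Otimes>\<^sub>M ?PJ))) \<partial>?P0)"
    by (rule PJ.emeasure_pair_measure_alt) (rule measurable_sets[OF merge_meas S])
  also have "\<dots> = (\<integral>\<^sup>+a. H (gen_from \<zeta> a 1) \<partial>?P0)"
  proof (rule nn_integral_cong)
    fix a assume a: "a \<in> space ?P0"
    let ?X = "{\<omega>' \<in> space ?B. \<Psi> (gen_from \<zeta> a 1) \<omega>'}"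
    have "Pair a -` (?mg -` ?S \<inter> space (?P0 \<Otimes>\<^sub>M ?PJ)) = shift -` ?X \<inter> space ?PJ"
    proof (rule set_eqI)
      fix b
      show "b \<in> Pair a -` (?mg -` ?S \<inter> space (?P0 \<Otimes>\<^sub>M ?PJ)) \<longleftrightarrow> b \<in> shift -` ?X \<inter> space ?PJ"
      proof
        assume "b \<in> Pair a -` (?mg -` ?S \<inter> space (?P0 \<Otimes>\<^sub>M ?PJ))"
        then show "b \<in> shift -` ?X \<inter> space ?PJ"
          using measurable_space[OF shift_meas, of b] a
          by (auto simp: space_pair_measure gen1_merge gen1_merge' shift_merge simp del: gen_from.simps)
      next
        assume b: "b \<in> shift -` ?X \<inter> space ?PJ"
        then have "?mg (a, b) \<in> space ?B"
          using measurable_space[OF merge_meas, of "(a,b)"] a by (auto simp: space_pair_measure)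
        then show "b \<in> Pair a -` (?mg -` ?S \<inter> space (?P0 \<Otimes>\<^sub>M ?PJ))"
          using a b by (auto simp: space_pair_measure gen1_merge gen1_merge' shift_merge simp del: gen_from.simps)
      qed
    qed
    also have "emeasure ?PJ \<dots> = emeasure (distr ?PJ ?B shift) ?X"
      by (rule emeasure_distr[OF shift_meas \<Psi>, symmetric])
    also have "\<dots> = H (gen_from \<zeta> a 1)"
      by (simp only: brw_distr_shift H_def)
    finally show "emeasure ?PJ (Pair a -` (?mg -` ?S \<inter> space (?P0 \<Otimes>\<^sub>M ?PJ))) = H (gen_from \<zeta> a 1)" .
  qed
  also have "\<dots> = (\<integral>\<^sup>+a. \<integral>\<^sup>+b. H (gen_from \<zeta> (?mg (a,b)) 1) \<partial>?PJ \<partial>?P0)"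
    by (rule nn_integral_cong) (simp add: gen1_merge gen1_merge' PJ.emeasure_space_1 del: gen_from.simps)
  also have "\<dots> = (\<integral>\<^sup>+x. H (gen_from \<zeta> (?mg x) 1) \<partial>(?P0 \<Otimes>\<^sub>M ?PJ))"
    by (rule PJ.nn_integral_fst[where f="\<lambda>x. H (gen_from \<zeta> (?mg x) 1)"])
       (rule measurable_compose[OF merge_meas gen1_Hmeas])
  also have "\<dots> = (\<integral>\<^sup>+\<omega>. H (gen_from \<zeta> \<omega> 1) \<partial>distr (?P0 \<Otimes>\<^sub>M ?PJ) ?B ?mg)"
    by (rule nn_integral_distr[OF merge_meas, symmetric]) (simp only: brw_distr_merge gen1_Hmeas)
  also have "\<dots> = (\<integral>\<^sup>+\<omega>. H (gen_from \<zeta> \<omega> 1) \<partial>?B)"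
    by (simp only: brw_distr_merge)
  finally show ?thesis unfolding H_def .
qed


lemma MM_meas: "f \<in> borel_measurable (MM \<mu> j)"
  by (cases j) (simp add: MM_def)

lemma prod_int:
  assumes S: "finite S"
  shows "(\<integral>\<^sup>+\<omega>. (\<Prod>j\<in>S. (h j (\<omega> j) :: ennreal)) \<partial>brw_space \<mu>) = (\<Prod>j\<in>S. \<integral>\<^sup>+m. h j m \<partial>MM \<mu> j)"
proof -
  interpret P: product_prob_space "MM \<mu>" UNIV by (rule PPS)
  have r: "(\<lambda>x. restrict x S) \<in> measurable (PiM UNIV (MM \<mu>)) (PiM S (MM \<mu>))"
    by (rule measurable_restrict_subset) simp
  have fm: "(\<lambda>x. \<Prod>j\<in>S. h j (x j)) \<in> borel_measurable (PiM S (MM \<mu>))"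
  proof (rule borel_measurable_prod_ennreal)
    fix j assume j: "j \<in> S"
    show "(\<lambda>x. h j (x j)) \<in> borel_measurable (PiM S (MM \<mu>))"
      using measurable_compose[OF measurable_component_singleton[of j S "MM \<mu>"] MM_meas[of "h j" j]] j by simp
  qed
  have "(\<integral>\<^sup>+\<omega>. (\<Prod>j\<in>S. h j (\<omega> j)) \<partial>brw_space \<mu>) = (\<integral>\<^sup>+\<omega>. (\<Prod>j\<in>S. h j (restrict \<omega> S j)) \<partial>PiM UNIV (MM \<mu>))"
    unfolding brw_space_MM by (intro nn_integral_cong prod.cong) auto
  also have "\<dots> = (\<integral>\<^sup>+x. (\<Prod>j\<in>S. h j (x j)) \<partial>distr (PiM UNIV (MM \<mu>)) (PiM S (MM \<mu>)) (\<lambda>x. restrict x S))"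
    by (rule nn_integral_distr[OF r, symmetric]) (simp add: P.distr_PiM_restrict_finite[OF S] fm)
  also have "\<dots> = (\<integral>\<^sup>+x. (\<Prod>j\<in>S. h j (x j)) \<partial>PiM S (MM \<mu>))"
    by (simp add: P.distr_PiM_restrict_finite[OF S])
  also have "\<dots> = (\<Prod>j\<in>S. \<integral>\<^sup>+m. h j m \<partial>MM \<mu> j)"
    by (rule P.product_nn_integral_prod[OF S MM_meas])
  finally show ?thesis .
qed


end




context fixes \<mu> :: "'a::countable \<Rightarrow> 'a multiset pmf"
begin

lemma allk_sets: "{\<omega> \<in> space (brw_space \<mu>). \<forall>k. Q k (gen_from \<zeta> \<omega> k)} \<in> sets (brw_space \<mu>)"
  apply (rule sets.sets_Collect_countable_All)
  apply (rule gen_sets)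
  done

definition EN :: "nat \<Rightarrow> (nat \<Rightarrow> 'a set) \<Rightarrow> 'a multiset \<Rightarrow> (nat \<times> nat \<times> 'a \<Rightarrow> 'a multiset) set" where
  "EN N B \<zeta> = {\<omega> \<in> space (brw_space \<mu>). \<forall>k\<le>N. \<forall>y\<in>B k. count (gen_from \<zeta> \<omega> k) y = 0}"

lemma EN_sets: "EN N B \<zeta> \<in> sets (brw_space \<mu>)"
  using allk_sets[of "\<lambda>k m. k \<le> N \<longrightarrow> (\<forall>y\<in>B k. count m y = 0)"] unfolding EN_def by assumption

lemma all_le_Suc: "(\<forall>k\<le>Suc N. P k) \<longleftrightarrow> P 0 \<and> (\<forall>k\<le>N. P (Suc k))"
  apply (rule iffI)
   apply simp
  apply clarify
  subgoal for k by (cases k) auto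
  done

lemma pm_sum: "prod_mset (image_mset w (sum f A)) = (\<Prod>a\<in>A. prod_mset (image_mset w (f a)))"
  by (induction A rule: infinite_finite_induct) auto

lemma pm_ind: "prod_mset (image_mset (\<lambda>z. if P z then (1::ennreal) else 0) \<zeta>) = (if \<forall>z\<in>#\<zeta>. P z then 1 else 0)"
  by (induction \<zeta>) auto

lemma pm_ind2: "prod_mset (image_mset (\<lambda>z. if P z then (c z::ennreal) else 0) \<zeta>) =
   (if \<forall>z\<in>#\<zeta>. P z then prod_mset (image_mset c \<zeta>) else 0)"
  by (induction \<zeta>) auto

lemma prod_Sig_reindex:
  fixes c :: "'b \<Rightarrow> nat"
  assumes "finite Y"
  shows "(\<Prod>y\<in>Y. \<Prod>i<c y. g (0::nat, i, y)) = (\<Prod>j\<in>(\<lambda>(y,i). (0::nat, i, y)) ` (SIGMA y:Y. {..<c y}). (g j :: ennreal))"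
proof -
  have "(\<Prod>j\<in>(\<lambda>(y,i). (0::nat, i, y)) ` (SIGMA y:Y. {..<c y}). g j) = (\<Prod>p\<in>(SIGMA y:Y. {..<c y}). g (0, snd p, fst p))"
    by (subst prod.reindex) (auto simp: inj_on_def split_def)
  also have "\<dots> = (\<Prod>y\<in>Y. \<Prod>i<c y. g (0::nat, i, y))"
  proof -
    have f: "\<forall>x\<in>Y. finite {..<c x}" by simp
    show ?thesis using prod.Sigma[OF assms f, where g="\<lambda>y i. g (0,i,y)"] by (simp add: split_def)
  qed
  finally show ?thesis by simp
qed

lemma gen1_integral:
  "(\<integral>\<^sup>+\<omega>. prod_mset (image_mset w (gen_from \<zeta> \<omega> 1)) \<partial>brw_space \<mu>)
    = (\<Prod>y\<in>set_mset \<zeta>. (\<integral>\<^sup>+m. prod_mset (image_mset w m) \<partial>measure_pmf (\<mu> y)) ^ count \<zeta> y)"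
proof -
  let ?S = "(\<lambda>(y,i). (0::nat, i, y)) ` (SIGMA y:set_mset \<zeta>. {..<count \<zeta> y})"
  let ?F = "\<lambda>m. prod_mset (image_mset w m)"
  have "(\<integral>\<^sup>+\<omega>. ?F (gen_from \<zeta> \<omega> 1) \<partial>brw_space \<mu>) = (\<integral>\<^sup>+\<omega>. (\<Prod>j\<in>?S. ?F (\<omega> j)) \<partial>brw_space \<mu>)"
  proof (rule nn_integral_cong)
    fix \<omega> :: "nat \<times> nat \<times> 'a \<Rightarrow> 'a multiset"
    have "?F (gen_from \<zeta> \<omega> 1) = (\<Prod>y\<in>set_mset \<zeta>. \<Prod>i<count \<zeta> y. ?F (\<omega> (0, i, y)))"
      by (simp only: One_nat_def gen_from.simps pm_sum)
    also have "\<dots> = (\<Prod>j\<in>?S. ?F (\<omega> j))"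
      by (rule prod_Sig_reindex[where g="\<lambda>j. ?F (\<omega> j)"]) simp
    finally show "?F (gen_from \<zeta> \<omega> 1) = (\<Prod>j\<in>?S. ?F (\<omega> j))" .
  qed
  also have "\<dots> = (\<Prod>j\<in>?S. \<integral>\<^sup>+m. ?F m \<partial>MM \<mu> j)"
    by (rule prod_int) auto
  also have "\<dots> = (\<Prod>y\<in>set_mset \<zeta>. \<Prod>i<count \<zeta> y. \<integral>\<^sup>+m. ?F m \<partial>MM \<mu> (0, i, y))"
    by (rule prod_Sig_reindex[symmetric]) simp
  also have "\<dots> = (\<Prod>y\<in>set_mset \<zeta>. (\<integral>\<^sup>+m. ?F m \<partial>measure_pmf (\<mu> y)) ^ count \<zeta> y)"
    by (intro prod.cong refl) (simp add: MM_def)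
  finally show ?thesis .
qed


lemma space_brw: "space (brw_space \<mu>) = UNIV"
  by (auto simp: brw_space_MM space_PiM MM_def PiE_def extensional_def split: prod.splits)

lemma EN_0: "EN 0 B \<zeta> = (if \<forall>z\<in>#\<zeta>. z \<notin> B 0 then space (brw_space \<mu>) else {})"
  by (auto simp: EN_def count_eq_zero_iff)

lemma EN_Suc_eq: "EN (Suc N) B \<zeta> = {\<omega> \<in> space (brw_space \<mu>).
   (\<lambda>m \<omega>'. (\<forall>z\<in>#\<zeta>. z \<notin> B 0) \<and> \<omega>' \<in> EN N (\<lambda>k. B (Suc k)) m) (gen_from \<zeta> \<omega> 1) (shift \<omega>)}"
  unfolding EN_def space_brw
  by (simp only: all_le_Suc gen_from_Suc' gen_from.simps(1) count_eq_zero_iff mem_Collect_eq UNIV_I simp_thms) blast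

lemma EN_Suc_formula:
  assumes IH: "\<And>\<zeta>. emeasure (brw_space \<mu>) (EN N (\<lambda>k. B (Suc k)) \<zeta>) = prod_mset (image_mset w \<zeta>)"
  shows "emeasure (brw_space \<mu>) (EN (Suc N) B \<zeta>) = (if \<forall>z\<in>#\<zeta>. z \<notin> B 0 then
     \<Prod>y\<in>set_mset \<zeta>. (\<integral>\<^sup>+m. prod_mset (image_mset w m) \<partial>measure_pmf (\<mu> y)) ^ count \<zeta> y else 0)"
proof -
  let ?av = "\<forall>z\<in>#\<zeta>. z \<notin> B 0"
  let ?\<Psi> = "\<lambda>m \<omega>'. ?av \<and> \<omega>' \<in> EN N (\<lambda>k. B (Suc k)) m"
  have Pset: "{\<omega>' \<in> space (brw_space \<mu>). ?\<Psi> m \<omega>'} = (if ?av then EN N (\<lambda>k. B (Suc k)) m else {})" for m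
    by (auto simp: EN_def)
  have "emeasure (brw_space \<mu>) (EN (Suc N) B \<zeta>) =
     emeasure (brw_space \<mu>) {\<omega> \<in> space (brw_space \<mu>). ?\<Psi> (gen_from \<zeta> \<omega> 1) (shift \<omega>)}"
    by (simp only: EN_Suc_eq)
  also have "\<dots> = (\<integral>\<^sup>+\<omega>. emeasure (brw_space \<mu>) {\<omega>' \<in> space (brw_space \<mu>). ?\<Psi> (gen_from \<zeta> \<omega> 1) \<omega>'} \<partial>brw_space \<mu>)"
  proof (rule SPLIT)
    show "{\<omega>' \<in> space (brw_space \<mu>). ?\<Psi> m \<omega>'} \<in> sets (brw_space \<mu>)" for m
    proof (cases ?av)
      case True show ?thesis unfolding Pset if_P[OF True] by (rule EN_sets)
    next
      case False show ?thesis unfolding Pset if_not_P[OF False] by (rule sets.empty_sets)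
    qed
    show "{\<omega> \<in> space (brw_space \<mu>). ?\<Psi> (gen_from \<zeta> \<omega> 1) (shift \<omega>)} \<in> sets (brw_space \<mu>)"
      unfolding EN_Suc_eq[symmetric] by (rule EN_sets)
  qed
  also have "\<dots> = (\<integral>\<^sup>+\<omega>. (if ?av then prod_mset (image_mset w (gen_from \<zeta> \<omega> 1)) else 0) \<partial>brw_space \<mu>)"
    by (rule nn_integral_cong) (simp only: Pset IH emeasure_empty if_distrib[of "emeasure _"])
  also have "\<dots> = (if ?av then (\<integral>\<^sup>+\<omega>. prod_mset (image_mset w (gen_from \<zeta> \<omega> 1)) \<partial>brw_space \<mu>) else 0)"
  proof (cases ?av)
    case True show ?thesis unfolding if_P[OF True] ..
  next
    case False show ?thesis unfolding if_not_P[OF False] by simp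
  qed
  also have "\<dots> = (if ?av then \<Prod>y\<in>set_mset \<zeta>. (\<integral>\<^sup>+m. prod_mset (image_mset w m) \<partial>measure_pmf (\<mu> y)) ^ count \<zeta> y else 0)"
    by (simp only: gen1_integral)
  finally show ?thesis .
qed

lemma MULT: "emeasure (brw_space \<mu>) (EN N B \<zeta>) = prod_mset (image_mset (\<lambda>z. emeasure (brw_space \<mu>) (EN N B {#z#})) \<zeta>)"
proof (induction N arbitrary: B \<zeta>)
  case 0
  interpret prob_space "brw_space \<mu>" by (rule prob_brw)
  have "image_mset (\<lambda>z. emeasure (brw_space \<mu>) (EN 0 B {#z#})) \<zeta> = image_mset (\<lambda>z. if z \<notin> B 0 then 1 else 0) \<zeta>"
    by (intro image_mset_cong) (simp add: EN_0 emeasure_space_1)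
  then show ?case by (simp add: EN_0 pm_ind emeasure_space_1)
next
  case (Suc N)
  let ?w = "\<lambda>z. emeasure (brw_space \<mu>) (EN N (\<lambda>k. B (Suc k)) {#z#})"
  let ?c = "\<lambda>y. \<integral>\<^sup>+m. prod_mset (image_mset ?w m) \<partial>measure_pmf (\<mu> y)"
  have F: "emeasure (brw_space \<mu>) (EN (Suc N) B \<xi>) = (if \<forall>z\<in>#\<xi>. z \<notin> B 0 then
     \<Prod>y\<in>set_mset \<xi>. ?c y ^ count \<xi> y else 0)" for \<xi>
    by (rule EN_Suc_formula) (rule Suc.IH)
  have "image_mset (\<lambda>z. emeasure (brw_space \<mu>) (EN (Suc N) B {#z#})) \<zeta> = image_mset (\<lambda>z. if z \<notin> B 0 then ?c z else 0) \<zeta>"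
    by (intro image_mset_cong) (simp only: F, simp)
  then show ?case by (simp add: F pm_ind2 image_prod_mset_multiplicity)
qed

end




context fixes \<mu> :: "'a::countable \<Rightarrow> 'a multiset pmf"
begin

definition E :: "(nat \<Rightarrow> 'a set) \<Rightarrow> 'a multiset \<Rightarrow> (nat \<times> nat \<times> 'a \<Rightarrow> 'a multiset) set" where
  "E B \<zeta> = {\<omega> \<in> space (brw_space \<mu>). \<forall>k. \<forall>y\<in>B k. count (gen_from \<zeta> \<omega> k) y = 0}"

definition Ext :: "'a multiset \<Rightarrow> (nat \<times> nat \<times> 'a \<Rightarrow> 'a multiset) set" where
  "Ext \<zeta> = {\<omega> \<in> space (brw_space \<mu>). \<exists>n. gen_from \<zeta> \<omega> n = {#}}"

lemma E_sets: "E B \<zeta> \<in> sets (brw_space \<mu>)"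
  using allk_sets[of \<mu> "\<lambda>k m. \<forall>y\<in>B k. count m y = 0"] unfolding E_def by assumption

lemma Ext_sets: "Ext \<zeta> \<in> sets (brw_space \<mu>)"
  unfolding Ext_def
  apply (rule sets.sets_Collect_countable_Ex)
  apply (rule gen_sets)
  done

lemma E_INT: "E B \<zeta> = (\<Inter>N. EN \<mu> N B \<zeta>)"
  by (auto simp: E_def EN_def)

lemma EN_decseq: "decseq (\<lambda>N. EN \<mu> N B \<zeta>)"
  by (auto simp: decseq_def EN_def)

lemma MULT_real: "measure (brw_space \<mu>) (EN \<mu> N B \<zeta>) = (\<Prod>y\<in>set_mset \<zeta>. measure (brw_space \<mu>) (EN \<mu> N B {#y#}) ^ count \<zeta> y)"
proof -
  interpret prob_space "brw_space \<mu>" by (rule prob_brw)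
  have "ennreal (measure (brw_space \<mu>) (EN \<mu> N B \<zeta>)) = (\<Prod>y\<in>set_mset \<zeta>. ennreal (measure (brw_space \<mu>) (EN \<mu> N B {#y#})) ^ count \<zeta> y)"
    using MULT[of \<mu> N B \<zeta>] by (simp add: emeasure_eq_measure image_prod_mset_multiplicity)
  also have "\<dots> = ennreal (\<Prod>y\<in>set_mset \<zeta>. measure (brw_space \<mu>) (EN \<mu> N B {#y#}) ^ count \<zeta> y)"
    by (simp add: ennreal_power prod_ennreal)
  finally show ?thesis by (simp add: prod_nonneg)
qed

lemma prod_lim:
  fixes f :: "nat \<Rightarrow> 'a multiset \<Rightarrow> real"
  assumes "\<And>N \<xi>. f N \<xi> = (\<Prod>y\<in>set_mset \<xi>. f N {#y#} ^ count \<xi> y)"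
    and "\<And>\<xi>. (\<lambda>N. f N \<xi>) \<longlonglongrightarrow> L \<xi>"
  shows "L \<zeta> = (\<Prod>y\<in>set_mset \<zeta>. L {#y#} ^ count \<zeta> y)"
proof -
  have "(\<lambda>N. \<Prod>y\<in>set_mset \<zeta>. f N {#y#} ^ count \<zeta> y) \<longlonglongrightarrow> (\<Prod>y\<in>set_mset \<zeta>. L {#y#} ^ count \<zeta> y)"
    by (intro tendsto_prod tendsto_power assms(2))
  then have "(\<lambda>N. f N \<zeta>) \<longlonglongrightarrow> (\<Prod>y\<in>set_mset \<zeta>. L {#y#} ^ count \<zeta> y)"
    by (subst assms(1)) 
  then show ?thesis using assms(2) LIMSEQ_unique by blast
qed

lemma E_lim: "(\<lambda>N. measure (brw_space \<mu>) (EN \<mu> N B \<xi>)) \<longlonglongrightarrow> measure (brw_space \<mu>) (E B \<xi>)"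
proof -
  interpret prob_space "brw_space \<mu>" by (rule prob_brw)
  show ?thesis unfolding E_INT
    by (rule Lim_measure_decseq) (auto intro: EN_sets EN_decseq)
qed

lemma MULT_E: "measure (brw_space \<mu>) (E B \<zeta>) = (\<Prod>y\<in>set_mset \<zeta>. measure (brw_space \<mu>) (E B {#y#}) ^ count \<zeta> y)"
  by (rule prod_lim[OF MULT_real E_lim])

definition BU :: "nat \<Rightarrow> nat \<Rightarrow> 'a set" where "BU n k = (if Suc n \<le> k then UNIV else {})"

lemma Ext_UN: "Ext \<zeta> = (\<Union>n. E (BU n) \<zeta>)"
proof (rule set_eqI)
  fix \<omega>
  show "\<omega> \<in> Ext \<zeta> \<longleftrightarrow> \<omega> \<in> (\<Union>n. E (BU n) \<zeta>)"
  proof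
    assume "\<omega> \<in> Ext \<zeta>"
    then obtain n where "gen_from \<zeta> \<omega> n = {#}" "\<omega> \<in> space (brw_space \<mu>)" by (auto simp: Ext_def)
    then have "\<omega> \<in> E (BU n) \<zeta>"
      using gen_from_empty[of \<zeta> \<omega> n] by (auto simp: E_def BU_def)
    then show "\<omega> \<in> (\<Union>n. E (BU n) \<zeta>)" by blast
  next
    assume "\<omega> \<in> (\<Union>n. E (BU n) \<zeta>)"
    then obtain n where n: "\<omega> \<in> E (BU n) \<zeta>" by blast
    then have "\<forall>k. \<forall>y\<in>BU n k. count (gen_from \<zeta> \<omega> k) y = 0" unfolding E_def by blast
    then have "\<forall>y\<in>BU n (Suc n). count (gen_from \<zeta> \<omega> (Suc n)) y = 0" by blast
    then have "gen_from \<zeta> \<omega> (Suc n) = {#}"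
      unfolding BU_def by (simp del: gen_from.simps add: multiset_eq_iff)
    moreover have "\<omega> \<in> space (brw_space \<mu>)" using n by (simp add: E_def)
    ultimately show "\<omega> \<in> Ext \<zeta>" unfolding Ext_def by blast
  qed
qed

lemma E_BU_incseq: "incseq (\<lambda>n. E (BU n) \<zeta>)"
  by (auto simp: incseq_def E_def BU_def)

lemma Ext_lim: "(\<lambda>n. measure (brw_space \<mu>) (E (BU n) \<xi>)) \<longlonglongrightarrow> measure (brw_space \<mu>) (Ext \<xi>)"
proof -
  interpret prob_space "brw_space \<mu>" by (rule prob_brw)
  show ?thesis unfolding Ext_UN
    by (rule Lim_measure_incseq) (auto intro: E_sets E_BU_incseq)
qed

lemma MULT_Ext: "measure (brw_space \<mu>) (Ext \<zeta>) = (\<Prod>y\<in>set_mset \<zeta>. measure (brw_space \<mu>) (Ext {#y#}) ^ count \<zeta> y)"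
  by (rule prod_lim[OF MULT_E Ext_lim])


lemma all_nat: "(\<forall>k. P k) \<longleftrightarrow> P 0 \<and> (\<forall>k. P (Suc k))"
  apply (rule iffI)
   apply simp
  apply clarify
  subgoal for k by (cases k) auto
  done

lemma ex_nat: "(\<exists>k. P k) \<longleftrightarrow> P 0 \<or> (\<exists>k. P (Suc k))"
  apply (rule iffI)
   apply clarify
  subgoal for k by (cases k) auto
  apply auto
  done

lemma sub_space_eq: "S \<subseteq> space M \<Longrightarrow> {\<omega> \<in> space M. \<omega> \<in> S} = S"
  by auto

lemma E_coll: "{\<omega> \<in> space (brw_space \<mu>). \<omega> \<in> E B m} = E B m"
  by (auto simp: E_def)

lemma Ext_coll: "{\<omega> \<in> space (brw_space \<mu>). \<omega> \<in> Ext m} = Ext m"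
  by (auto simp: Ext_def)

lemma E_emeasure_pm: "emeasure (brw_space \<mu>) (E B m) = prod_mset (image_mset (\<lambda>z. ennreal (measure (brw_space \<mu>) (E B {#z#}))) m)"
proof -
  interpret prob_space "brw_space \<mu>" by (rule prob_brw)
  show ?thesis
    by (simp add: emeasure_eq_measure image_prod_mset_multiplicity ennreal_power prod_ennreal MULT_E[of B m])
qed

lemma Ext_emeasure_pm: "emeasure (brw_space \<mu>) (Ext m) = prod_mset (image_mset (\<lambda>z. ennreal (measure (brw_space \<mu>) (Ext {#z#}))) m)"
proof -
  interpret prob_space "brw_space \<mu>" by (rule prob_brw)
  show ?thesis
    by (simp add: emeasure_eq_measure image_prod_mset_multiplicity ennreal_power prod_ennreal MULT_Ext[of m])
qed

lemma E_rec:
  assumes x: "x \<notin> B 0"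
  shows "emeasure (brw_space \<mu>) (E B {#x#}) = (\<integral>\<^sup>+m. prod_mset (image_mset (\<lambda>z. ennreal (measure (brw_space \<mu>) (E (\<lambda>k. B (Suc k)) {#z#}))) m) \<partial>measure_pmf (\<mu> x))"
proof -
  let ?B' = "\<lambda>k. B (Suc k)"
  have eq: "E B {#x#} = {\<omega> \<in> space (brw_space \<mu>). (\<lambda>m \<omega>'. \<omega>' \<in> E ?B' m) (gen_from {#x#} \<omega> 1) (shift \<omega>)}"
  proof -
    have "(\<forall>k. \<forall>y\<in>B k. count (gen_from {#x#} \<omega> k) y = 0) \<longleftrightarrow>
        (\<forall>k. \<forall>y\<in>B (Suc k). count (gen_from (gen_from {#x#} \<omega> 1) (shift \<omega>) k) y = 0)" for \<omega>
    proof -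
      have h: "(\<forall>y\<in>B 0. count (gen_from {#x#} \<omega> 0) y = 0)" using x by (auto simp: count_single)
      show ?thesis
        apply (subst all_nat)
        apply (simp only: gen_from_Suc')
        using h by blast
    qed
    then show ?thesis unfolding E_def space_brw by blast
  qed
  have "emeasure (brw_space \<mu>) (E B {#x#}) = (\<integral>\<^sup>+\<omega>. emeasure (brw_space \<mu>) {\<omega>' \<in> space (brw_space \<mu>). \<omega>' \<in> E ?B' (gen_from {#x#} \<omega> 1)} \<partial>brw_space \<mu>)"
    unfolding eq
  proof (rule SPLIT)
    show "{\<omega>' \<in> space (brw_space \<mu>). \<omega>' \<in> E ?B' m} \<in> sets (brw_space \<mu>)" for m
    proof -
      have sub: "E ?B' m \<subseteq> space (brw_space \<mu>)" by (auto simp: E_def)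
      show ?thesis unfolding sub_space_eq[OF sub] by (rule E_sets)
    qed
    show "{\<omega> \<in> space (brw_space \<mu>). shift \<omega> \<in> E ?B' (gen_from {#x#} \<omega> 1)} \<in> sets (brw_space \<mu>)"
      using E_sets[of B "{#x#}"] unfolding eq .
  qed
  also have "\<dots> = (\<integral>\<^sup>+\<omega>. prod_mset (image_mset (\<lambda>z. ennreal (measure (brw_space \<mu>) (E ?B' {#z#}))) (gen_from {#x#} \<omega> 1)) \<partial>brw_space \<mu>)"
    by (rule nn_integral_cong) (simp only: E_coll E_emeasure_pm)
  also have "\<dots> = (\<integral>\<^sup>+m. prod_mset (image_mset (\<lambda>z. ennreal (measure (brw_space \<mu>) (E ?B' {#z#}))) m) \<partial>measure_pmf (\<mu> x))"
    by (simp only: gen1_integral) simp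
  finally show ?thesis .
qed


lemma Ext_rec:
  "emeasure (brw_space \<mu>) (Ext {#x#}) = (\<integral>\<^sup>+m. prod_mset (image_mset (\<lambda>z. ennreal (measure (brw_space \<mu>) (Ext {#z#}))) m) \<partial>measure_pmf (\<mu> x))"
proof -
  have eq: "Ext {#x#} = {\<omega> \<in> space (brw_space \<mu>). (\<lambda>m \<omega>'. \<omega>' \<in> Ext m) (gen_from {#x#} \<omega> 1) (shift \<omega>)}"
  proof -
    have "(\<exists>n. gen_from {#x#} \<omega> n = {#}) \<longleftrightarrow> (\<exists>n. gen_from (gen_from {#x#} \<omega> 1) (shift \<omega>) n = {#})" for \<omega>
    proof -
      have h: "gen_from {#x#} \<omega> 0 \<noteq> {#}" by simp
      show ?thesis
        apply (subst ex_nat)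
        apply (simp only: gen_from_Suc')
        using h by blast
    qed
    then show ?thesis unfolding Ext_def space_brw by blast
  qed
  have "emeasure (brw_space \<mu>) (Ext {#x#}) = (\<integral>\<^sup>+\<omega>. emeasure (brw_space \<mu>) {\<omega>' \<in> space (brw_space \<mu>). \<omega>' \<in> Ext (gen_from {#x#} \<omega> 1)} \<partial>brw_space \<mu>)"
    unfolding eq
  proof (rule SPLIT)
    show "{\<omega>' \<in> space (brw_space \<mu>). \<omega>' \<in> Ext m} \<in> sets (brw_space \<mu>)" for m
      unfolding Ext_coll by (rule Ext_sets)
    show "{\<omega> \<in> space (brw_space \<mu>). shift \<omega> \<in> Ext (gen_from {#x#} \<omega> 1)} \<in> sets (brw_space \<mu>)"
      using Ext_sets[of "{#x#}"] unfolding eq .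
  qed
  also have "\<dots> = (\<integral>\<^sup>+\<omega>. prod_mset (image_mset (\<lambda>z. ennreal (measure (brw_space \<mu>) (Ext {#z#}))) (gen_from {#x#} \<omega> 1)) \<partial>brw_space \<mu>)"
    by (rule nn_integral_cong) (simp only: Ext_coll Ext_emeasure_pm)
  also have "\<dots> = (\<integral>\<^sup>+m. prod_mset (image_mset (\<lambda>z. ennreal (measure (brw_space \<mu>) (Ext {#z#}))) m) \<partial>measure_pmf (\<mu> x))"
    by (simp only: gen1_integral) simp
  finally show ?thesis .
qed

definition BA :: "'a set \<Rightarrow> nat \<Rightarrow> nat \<Rightarrow> 'a set" where "BA A n k = (if Suc n \<le> k then A else {})"

definition LE :: "'a \<Rightarrow> 'a set \<Rightarrow> (nat \<times> nat \<times> 'a \<Rightarrow> 'a multiset) set" where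
  "LE x A = {\<omega> \<in> space (brw_space \<mu>). \<exists>n. \<forall>k\<ge>Suc n. \<forall>y\<in>A. count (brw_gen x \<omega> k) y = 0}"

lemma qn_eq: "brw_qn \<mu> n x A = measure (brw_space \<mu>) (E (BA A n) {#x#})"
proof -
  have "{\<omega> \<in> space (brw_space \<mu>). \<forall>k\<ge>Suc n. \<forall>y\<in>A. count (brw_gen x \<omega> k) y = 0} = E (BA A n) {#x#}"
    by (auto simp: E_def BA_def brw_gen_eq simp del: gen_from.simps)
  then show ?thesis unfolding brw_qn_def by simp
qed

lemma LE_UN: "LE x A = (\<Union>n. E (BA A n) {#x#})"
  by (auto simp: LE_def E_def BA_def brw_gen_eq simp del: gen_from.simps)

lemma BA_incseq: "incseq (\<lambda>n. E (BA A n) \<zeta>)"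
  by (auto simp: incseq_def E_def BA_def)

lemma LE_sets: "LE x A \<in> sets (brw_space \<mu>)"
  unfolding LE_UN by (rule sets.countable_UN) (rule image_subsetI, rule E_sets)

lemma qn_lim: "(\<lambda>n. brw_qn \<mu> n x A) \<longlonglongrightarrow> measure (brw_space \<mu>) (LE x A)"
proof -
  interpret prob_space "brw_space \<mu>" by (rule prob_brw)
  show ?thesis unfolding qn_eq LE_UN
    by (rule Lim_measure_incseq) (auto intro: E_sets BA_incseq)
qed

lemma q_eq: "brw_q \<mu> x A = measure (brw_space \<mu>) (LE x A)"
  unfolding brw_q_def using qn_lim by (rule limI)

lemma qn_incseq: "incseq (\<lambda>n. brw_qn \<mu> n x A)"
proof -
  interpret prob_space "brw_space \<mu>" by (rule prob_brw)
  show ?thesis unfolding qn_eq incseq_def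
  proof (intro allI impI)
    fix m n :: nat assume "m \<le> n"
    then have "E (BA A m) {#x#} \<subseteq> E (BA A n) {#x#}" using BA_incseq[of A "{#x#}"] by (simp add: incseq_def)
    then show "measure (brw_space \<mu>) (E (BA A m) {#x#}) \<le> measure (brw_space \<mu>) (E (BA A n) {#x#})"
      by (rule finite_measure_mono) (rule E_sets)
  qed
qed

lemma BA_UNIV: "BA UNIV n = BU n"
  by (auto simp: BA_def BU_def fun_eq_iff)

lemma qbar_eq: "brw_qbar \<mu> x = measure (brw_space \<mu>) (Ext {#x#})"
  unfolding brw_qbar_def q_eq LE_UN BA_UNIV Ext_UN ..

lemma R1: "ennreal (brw_qn \<mu> (Suc n) x A) = (\<integral>\<^sup>+m. prod_mset (image_mset (\<lambda>z. ennreal (brw_qn \<mu> n z A)) m) \<partial>measure_pmf (\<mu> x))"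
proof -
  interpret prob_space "brw_space \<mu>" by (rule prob_brw)
  have 1: "x \<notin> BA A (Suc n) 0" by (simp add: BA_def)
  have 2: "(\<lambda>k. BA A (Suc n) (Suc k)) = BA A n" by (auto simp: BA_def fun_eq_iff)
  have e: "emeasure (brw_space \<mu>) (E (BA A (Suc n)) {#x#}) = (\<integral>\<^sup>+m. prod_mset (image_mset (\<lambda>z. ennreal (measure (brw_space \<mu>) (E (BA A n) {#z#}))) m) \<partial>measure_pmf (\<mu> x))"
    using E_rec[where B="BA A (Suc n)" and x=x, OF 1] unfolding 2 .
  show ?thesis unfolding qn_eq using e by (simp only: emeasure_eq_measure)
qed

lemma R2: "ennreal (brw_qbar \<mu> x) = (\<integral>\<^sup>+m. prod_mset (image_mset (\<lambda>z. ennreal (brw_qbar \<mu> z)) m) \<partial>measure_pmf (\<mu> x))"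
proof -
  interpret prob_space "brw_space \<mu>" by (rule prob_brw)
  show ?thesis unfolding qbar_eq using Ext_rec[of x] by (simp only: emeasure_eq_measure)
qed

end

lemma pm_mono: "(\<And>z. 0 \<le> f z \<and> f z \<le> g z) \<Longrightarrow>
   prod_mset (image_mset (\<lambda>z. ennreal (f z)) m) \<le> prod_mset (image_mset (\<lambda>z. ennreal (g z)) m)"
  by (induction m) (auto intro!: mult_mono ennreal_leI)




context fixes \<mu> :: "'a::countable \<Rightarrow> 'a multiset pmf"
begin

lemma Ext_sub_LE: "Ext \<mu> {#x#} \<subseteq> LE \<mu> x A"
proof
  fix \<omega> assume "\<omega> \<in> Ext \<mu> {#x#}"
  then obtain n where n: "gen_from {#x#} \<omega> n = {#}" and s: "\<omega> \<in> space (brw_space \<mu>)" by (auto simp: Ext_def)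
  have "\<forall>k\<ge>Suc n. \<forall>y\<in>A. count (brw_gen x \<omega> k) y = 0"
    using gen_from_empty[OF n] by (simp add: brw_gen_eq del: gen_from.simps)
  then show "\<omega> \<in> LE \<mu> x A" using s unfolding LE_def by blast
qed

lemma local_eq: "local_survival \<mu> x A = space (brw_space \<mu>) - LE \<mu> x A"
  unfolding local_survival_def LE_def ..

lemma global_eq: "global_survival \<mu> x = space (brw_space \<mu>) - Ext \<mu> {#x#}"
  unfolding global_survival_def Ext_def by (auto simp: brw_gen_eq simp del: gen_from.simps)

lemma ratio_eq: "measure (brw_space \<mu>) (local_survival \<mu> x A \<inter> global_survival \<mu> x)
   / measure (brw_space \<mu>) (global_survival \<mu> x) = (1 - brw_q \<mu> x A) / (1 - brw_qbar \<mu> x)"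
proof -
  interpret prob_space "brw_space \<mu>" by (rule prob_brw)
  have "local_survival \<mu> x A \<inter> global_survival \<mu> x = local_survival \<mu> x A"
    unfolding local_eq global_eq using Ext_sub_LE[of x A] by blast
  moreover have "measure (brw_space \<mu>) (local_survival \<mu> x A) = 1 - brw_q \<mu> x A"
    unfolding local_eq q_eq by (rule prob_compl) (rule LE_sets)
  moreover have "measure (brw_space \<mu>) (global_survival \<mu> x) = 1 - brw_qbar \<mu> x"
    unfolding global_eq qbar_eq by (rule prob_compl) (rule Ext_sets)
  ultimately show ?thesis by simp
qed

lemma qb_le_q: "brw_qbar \<mu> x \<le> brw_q \<mu> x A"
proof -
  interpret prob_space "brw_space \<mu>" by (rule prob_brw)
  show ?thesis unfolding qbar_eq q_eq
    by (rule finite_measure_mono[OF Ext_sub_LE LE_sets])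
qed

lemma q_le_1: "brw_q \<mu> x A \<le> 1"
proof -
  interpret prob_space "brw_space \<mu>" by (rule prob_brw)
  show ?thesis unfolding q_eq by (rule prob_le_1)
qed

lemma qn_le_q: "brw_qn \<mu> n x A \<le> brw_q \<mu> x A"
  unfolding q_eq by (rule incseq_le[OF qn_incseq qn_lim])

lemma qn_nonneg: "0 \<le> brw_qn \<mu> n x A"
  unfolding brw_qn_def by (rule measure_nonneg)

lemma qbar_nonneg: "0 \<le> brw_qbar \<mu> x"
  unfolding qbar_eq by (rule measure_nonneg)

lemma induct_le:
  assumes base: "\<And>x. brw_qn \<mu> 0 x A \<le> brw_qbar \<mu> x"
  shows "brw_qn \<mu> n x A \<le> brw_qbar \<mu> x"
proof (induction n arbitrary: x)
  case 0 then show ?case by (rule base)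
next
  case (Suc n)
  have "ennreal (brw_qn \<mu> (Suc n) x A) = (\<integral>\<^sup>+m. prod_mset (image_mset (\<lambda>z. ennreal (brw_qn \<mu> n z A)) m) \<partial>measure_pmf (\<mu> x))"
    by (rule R1)
  also have "\<dots> \<le> (\<integral>\<^sup>+m. prod_mset (image_mset (\<lambda>z. ennreal (brw_qbar \<mu> z)) m) \<partial>measure_pmf (\<mu> x))"
    by (intro nn_integral_mono pm_mono conjI qn_nonneg Suc.IH)
  also have "\<dots> = ennreal (brw_qbar \<mu> x)"
    by (rule R2[symmetric])
  finally show ?case using qbar_nonneg by simp
qed

lemma q_le_qbar:
  assumes base: "\<And>x. brw_qn \<mu> 0 x A \<le> brw_qbar \<mu> x"
  shows "brw_q \<mu> x A \<le> brw_qbar \<mu> x"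
  unfolding q_eq
  by (rule LIMSEQ_le_const2[OF qn_lim]) (auto intro: induct_le[OF base])

end

lemma ratio_iff: "(b::real) \<le> a \<Longrightarrow> a \<le> 1 \<Longrightarrow> (a = b) \<longleftrightarrow> (b = 1 \<or> (1 - a) / (1 - b) = 1)"
  by (cases "b = 1") (auto simp: field_simps)

theorem mainTheorem15:
  fixes \<mu> :: "'a::countable \<Rightarrow> 'a multiset pmf" and A :: "'a set"
  assumes "A \<noteq> {}"
  shows "((\<forall>x. brw_q \<mu> x A = brw_qbar \<mu> x) \<longleftrightarrow> (\<forall>x. brw_qn \<mu> 0 x A \<le> brw_qbar \<mu> x))
       \<and> ((\<forall>x. brw_qn \<mu> 0 x A \<le> brw_qbar \<mu> x) \<longleftrightarrow>
          (\<forall>x. brw_qbar \<mu> x = 1 \<or>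
               measure (brw_space \<mu>) (local_survival \<mu> x A \<inter> global_survival \<mu> x)
                 / measure (brw_space \<mu>) (global_survival \<mu> x) = 1))"
proof -
  have A12: "(\<forall>x. brw_q \<mu> x A = brw_qbar \<mu> x) \<longleftrightarrow> (\<forall>x. brw_qn \<mu> 0 x A \<le> brw_qbar \<mu> x)"
  proof
    assume h: "\<forall>x. brw_q \<mu> x A = brw_qbar \<mu> x"
    show "\<forall>x. brw_qn \<mu> 0 x A \<le> brw_qbar \<mu> x"
      using h qn_le_q by metis
  next
    assume h: "\<forall>x. brw_qn \<mu> 0 x A \<le> brw_qbar \<mu> x"
    show "\<forall>x. brw_q \<mu> x A = brw_qbar \<mu> x"
      using q_le_qbar[of \<mu> A] h qb_le_q by (metis order_antisym)
  qed
  have A13: "(\<forall>x. brw_q \<mu> x A = brw_qbar \<mu> x) \<longleftrightarrow>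
          (\<forall>x. brw_qbar \<mu> x = 1 \<or>
               measure (brw_space \<mu>) (local_survival \<mu> x A \<inter> global_survival \<mu> x)
                 / measure (brw_space \<mu>) (global_survival \<mu> x) = 1)"
    unfolding ratio_eq using ratio_iff[OF qb_le_q q_le_1] by blast
  show ?thesis using A12 A13 by blast
qed


end
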